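(* Let $\mathbb{F}\in\{\mathbb{R},\mathbb{C}\}$, $M>N\ge 1$, and let $\mathcal{P}(M,N)$ be the set of Parseval frames for $\mathbb{F}^N$ with $M$ vectors. If $\Psi\in\mathcal{P}(M,N)$ maximizes $TC$ over $\mathcal{P}(M,N)$, then $$\max\{N,M-N\}\leq TC(\Psi)\leq\sqrt{N(M-N)(M-1)}.$$
   Context: A Parseval frame for $\mathbb{F}^N$ is a family $\{\varphi_i\}_{i=1}^M\subseteq\mathbb{F}^N$ whose $N\times M$ matrix $\Phi$ (columns $\varphi_i$) satisfies $\Phi\Phi^*=I$. The total coherence is $TC(\Phi)=\sum_{i\neq j}|\langle\varphi_i,\varphi_j\rangle|$. *)

theory Defs
  imports Complex_Main
begin

(* A family of M vectors in F^N is encoded as its N x M synthesis matrix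
   Phi :: nat => nat => complex, with entry Phi r j (row r < N, column j < M);
   the j-th frame vector is phi_j = (Phi 0 j, ..., Phi (N-1) j).
   The scalar field F in {R, C} is encoded as a subset Fld of complex:
   Fld = \<real> (real frames) or Fld = UNIV (complex frames).
   Entries outside the index ranges are irrelevant. *)

definition frame_inner :: "nat \<Rightarrow> (nat \<Rightarrow> nat \<Rightarrow> complex) \<Rightarrow> nat \<Rightarrow> nat \<Rightarrow> complex" where
  "frame_inner N Phi i j = (\<Sum>r<N. Phi r i * cnj (Phi r j))"

definition parseval_frames :: "complex set \<Rightarrow> nat \<Rightarrow> nat \<Rightarrow> (nat \<Rightarrow> nat \<Rightarrow> complex) set" where
  "parseval_frames Fld M N =
     {Phi. (\<forall>r<N. \<forall>j<M. Phi r j \<in> Fld) \<and>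
           (\<forall>r<N. \<forall>s<N. (\<Sum>j<M. Phi r j * cnj (Phi s j)) = (if r = s then 1 else 0))}"

definition total_coherence :: "nat \<Rightarrow> nat \<Rightarrow> (nat \<Rightarrow> nat \<Rightarrow> complex) \<Rightarrow> real" where
  "total_coherence M N Phi =
     (\<Sum>i<M. \<Sum>j\<in>{..<M} - {i}. cmod (frame_inner N Phi i j))"

end

theory Submission
  imports Defs "HOL-Analysis.Analysis"
begin


lemma hh:
  fixes v :: "nat \<Rightarrow> real"
  assumes c: "c \<noteq> 0" and sv: "(\<Sum>k<K. (v k)^2) = 2*c" and i: "i < K" and j: "j < K"
  shows "(\<Sum>k<K. ((if i=k then 1 else 0) - v i * v k / c) * ((if k=j then 1 else 0) - v k * v j / c))
     = (if i = j then 1 else 0)"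
proof -
  have e: "\<And>k. ((if i=k then 1 else 0) - v i * v k / c) * ((if k=j then 1 else 0) - v k * v j / c)
      = ((if i=k then (if k=j then 1 else 0) else 0) - (if i = k then v k * v j / c else 0))
        - (if j = k then v i * v k / c else 0) + (v i * v j / c^2) * (v k)^2"
    using c by (auto simp: power2_eq_square field_simps)
  have s4: "(\<Sum>k<K. (v i * v j / c^2) * (v k)^2) = v i * v j * 2 / c"
  proof -
    have "(\<Sum>k<K. (v i * v j / c^2) * (v k)^2) = (v i * v j / c^2) * (2*c)"
      by (simp only: sum_distrib_left[symmetric] sv)
    also have "\<dots> = v i * v j * 2 / c" using c by (simp add: power2_eq_square field_simps)
    finally show ?thesis .
  qed
  have s1: "(\<Sum>k<K. (if i=k then (if k=j then 1 else 0) else 0::real)) = (if i = j then 1 else 0)"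
    using i by (simp add: sum.delta')
  have s2: "(\<Sum>k<K. (if i=k then v k * v j / c else 0)) = v i * v j / c"
    using i by (simp add: sum.delta')
  have s3: "(\<Sum>k<K. (if j=k then v i * v k / c else 0)) = v i * v j / c"
    using j by (simp add: sum.delta')
  show ?thesis
    unfolding e sum.distrib sum_subtractf s1 s2 s3 s4 by simp
qed

lemma fi_real: "frame_inner N (\<lambda>r j. complex_of_real (A r j)) i j = complex_of_real (\<Sum>r<N. A r i * A r j)"
  by (simp add: frame_inner_def)

lemma rows_real: "(\<Sum>j<M. complex_of_real (A r j) * cnj (complex_of_real (A s j))) = complex_of_real (\<Sum>j<M. A r j * A s j)"
  by simp

lemma sum_if_less: "(K::nat) \<le> M \<Longrightarrow> (\<Sum>j<M. if j<K then f j else 0) = (\<Sum>j<K. f j)"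
proof -
  assume "K \<le> M"
  then have "{..<K} \<subseteq> {..<M}" by auto
  then show ?thesis
    by (intro sum.mono_neutral_cong_right) auto
qed

lemma real_mem: "Fld = \<real> \<or> Fld = UNIV \<Longrightarrow> complex_of_real x \<in> Fld"
  by auto

lemma tc_block:
  assumes S: "S \<subseteq> {..<M}" "card S = K" "K > 0"
    and g: "\<forall>i\<in>S. \<forall>j\<in>S. i \<noteq> j \<longrightarrow> cmod (frame_inner N Phi i j) = 1 / real K"
  shows "real K - 1 \<le> total_coherence M N Phi"
proof -
  have fin: "finite S" using S by (metis card_gt_0_iff)
  have "real K - 1 = (\<Sum>i\<in>S. \<Sum>j\<in>S - {i}. 1 / real K)"
    using S fin by (simp add: card_Diff_singleton field_simps of_nat_diff Suc_le_eq)
  also have "\<dots> = (\<Sum>i\<in>S. \<Sum>j\<in>S - {i}. cmod (frame_inner N Phi i j))"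
    using g by (intro sum.cong refl) auto
  also have "\<dots> \<le> (\<Sum>i\<in>S. \<Sum>j\<in>{..<M} - {i}. cmod (frame_inner N Phi i j))"
    using S by (intro sum_mono sum_mono2) auto
  also have "\<dots> \<le> (\<Sum>i<M. \<Sum>j\<in>{..<M} - {i}. cmod (frame_inner N Phi i j))"
    using S by (intro sum_mono2) (auto intro: sum_nonneg)
  finally show ?thesis unfolding total_coherence_def .
qed

definition uB :: "nat \<Rightarrow> real" where "uB K = 1 / sqrt (real K)"
definition vB :: "nat \<Rightarrow> nat \<Rightarrow> real" where "vB K k = (if k = 0 then 1 else 0) - uB K"
definition HB :: "nat \<Rightarrow> nat \<Rightarrow> nat \<Rightarrow> real" where
  "HB K i j = (if i = j then 1 else 0) - vB K i * vB K j / (1 - uB K)"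
definition PhiB :: "nat \<Rightarrow> nat \<Rightarrow> nat \<Rightarrow> complex" where
  "PhiB N r j = complex_of_real (if j < Suc N then HB (Suc N) (Suc r) j else 0)"

lemma uB_props:
  assumes "2 \<le> K"
  shows "uB K < 1" "0 < uB K" "real K * (uB K)^2 = 1"
proof -
  have "1 < sqrt (real K)" using assms by simp
  then show "uB K < 1" "0 < uB K" unfolding uB_def by auto
  show "real K * (uB K)^2 = 1" using assms unfolding uB_def by (simp add: power_divide)
qed

lemma HB_orth:
  assumes K: "2 \<le> K" and i: "i < K" and j: "j < K"
  shows "(\<Sum>k<K. HB K i k * HB K k j) = (if i = j then 1 else 0)"
proof -
  have c: "1 - uB K \<noteq> 0" using uB_props[OF K] by simp
  obtain K' where K': "K = Suc K'" using K by (cases K) auto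
  have "(\<Sum>k<K. (vB K k)^2) = (1 - uB K)^2 + real K' * (uB K)^2"
    unfolding K' sum.lessThan_Suc_shift by (simp add: vB_def)
  also have "\<dots> = 2 * (1 - uB K)"
    using uB_props(3)[OF K] unfolding K' by (simp add: power2_eq_square algebra_simps)
  finally have sv: "(\<Sum>k<K. (vB K k)^2) = 2 * (1 - uB K)" .
  show ?thesis
    unfolding HB_def using hh[OF c sv i j] by simp
qed

lemma HB_sym: "HB K i j = HB K j i"
  unfolding HB_def by auto

lemma HB_row0: "2 \<le> K \<Longrightarrow> HB K 0 j = uB K"
  using uB_props(1)[of K] unfolding HB_def vB_def by (auto simp: field_simps)

lemma PhiB_frame:
  assumes F: "Fld = \<real> \<or> Fld = UNIV" and N: "1 \<le> N" "N < M"
  shows "PhiB N \<in> parseval_frames Fld M N"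
proof -
  have K: "2 \<le> Suc N" using N by simp
  have "(\<Sum>j<M. PhiB N r j * cnj (PhiB N s j)) = (if r = s then 1 else 0)" if "r < N" "s < N" for r s
  proof -
    have "(\<Sum>j<M. PhiB N r j * cnj (PhiB N s j))
        = complex_of_real (\<Sum>j<M. if j < Suc N then HB (Suc N) (Suc r) j * HB (Suc N) j (Suc s) else 0)"
      unfolding of_real_sum by (intro sum.cong) (auto simp: HB_sym PhiB_def)
    also have "\<dots> = complex_of_real (\<Sum>j<Suc N. HB (Suc N) (Suc r) j * HB (Suc N) j (Suc s))"
      using N by (subst sum_if_less) auto
    also have "\<dots> = (if r = s then 1 else 0)"
      using HB_orth[OF K, of "Suc r" "Suc s"] that by simp
    finally show ?thesis .
  qed
  then show ?thesis unfolding parseval_frames_def PhiB_def using real_mem[OF F] by auto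
qed

lemma PhiB_tc:
  assumes F: "Fld = \<real> \<or> Fld = UNIV" and N: "1 \<le> N" "N < M"
  shows "real N \<le> total_coherence M N (PhiB N)"
proof -
  have K: "2 \<le> Suc N" using N by simp
  have "cmod (frame_inner N (PhiB N) i j) = 1 / real (Suc N)" if "i < Suc N" "j < Suc N" "i \<noteq> j" for i j
  proof -
    have "frame_inner N (PhiB N) i j = complex_of_real (\<Sum>r<N. HB (Suc N) (Suc r) i * HB (Suc N) (Suc r) j)"
      unfolding PhiB_def frame_inner_def using that by simp
    also have "(\<Sum>r<N. HB (Suc N) (Suc r) i * HB (Suc N) (Suc r) j)
        = (\<Sum>r<Suc N. HB (Suc N) i r * HB (Suc N) r j) - HB (Suc N) 0 i * HB (Suc N) 0 j"
      unfolding sum.lessThan_Suc_shift by (simp add: HB_sym)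
    also have "\<dots> = - ((uB (Suc N))^2)"
      using HB_orth[OF K that(1,2)] HB_row0[OF K] that(3) by (simp add: power2_eq_square)
    finally have fe: "frame_inner N (PhiB N) i j = complex_of_real (- ((uB (Suc N))^2))" .
    have "(uB (Suc N))^2 = 1 / real (Suc N)" using uB_props(3)[OF K]
      by (simp add: field_simps del: of_nat_Suc)
    then show ?thesis unfolding fe norm_of_real by simp
  qed
  then have "real (Suc N) - 1 \<le> total_coherence M N (PhiB N)"
    using N by (intro tc_block[of "{..<Suc N}"]) auto
  then show ?thesis by simp
qed


definition AA :: "nat \<Rightarrow> nat \<Rightarrow> nat \<Rightarrow> nat \<Rightarrow> real" where
  "AA M N r j = (if r = 0 then (if j < Suc (M - N) then uB (Suc (M - N)) else 0)
                 else (if j = r + (M - N) then 1 else 0))"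
definition PhiA :: "nat \<Rightarrow> nat \<Rightarrow> nat \<Rightarrow> nat \<Rightarrow> complex" where
  "PhiA M N r j = complex_of_real (AA M N r j)"

lemma PhiA_frame:
  assumes F: "Fld = \<real> \<or> Fld = UNIV" and N: "1 \<le> N" "N < M"
  shows "PhiA M N \<in> parseval_frames Fld M N"
proof -
  let ?K = "Suc (M - N)"
  have K: "2 \<le> ?K" using N by simp
  have "(\<Sum>j<M. AA M N r j * AA M N s j) = (if r = s then 1 else 0)" if rs: "r < N" "s < N" for r s
  proof (cases "r = 0")
    case r0: True
    show ?thesis
    proof (cases "s = 0")
      case True
      have "(\<Sum>j<M. AA M N r j * AA M N s j) = (\<Sum>j<M. if j < ?K then (uB ?K)^2 else 0)"
        using r0 True by (intro sum.cong) (auto simp: AA_def power2_eq_square)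
      also have "\<dots> = (\<Sum>j<?K. (uB ?K)^2)" using N by (intro sum_if_less) auto
      also have "\<dots> = 1" using uB_props(3)[OF K] by simp
      finally show ?thesis using r0 True by simp
    next
      case False
      have "(\<Sum>j<M. AA M N r j * AA M N s j) = (\<Sum>j<M. 0)"
        using r0 False by (intro sum.cong) (auto simp: AA_def)
      then show ?thesis using r0 False by simp
    qed
  next
    case r0: False
    show ?thesis
    proof (cases "s = 0")
      case True
      have "(\<Sum>j<M. AA M N r j * AA M N s j) = (\<Sum>j<M. 0)"
        using r0 True by (intro sum.cong) (auto simp: AA_def)
      then show ?thesis using r0 True by simp
    next
      case False
      have "(\<Sum>j<M. AA M N r j * AA M N s j)
          = (\<Sum>j<M. if j = r + (M - N) then (if r = s then 1 else 0) else 0)"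
        using r0 False by (intro sum.cong) (auto simp: AA_def)
      also have "\<dots> = (if r = s then 1 else 0)" using rs N by auto
      finally show ?thesis .
    qed
  qed
  then have "(\<Sum>j<M. PhiA M N r j * cnj (PhiA M N s j)) = (if r = s then 1 else 0)" if "r < N" "s < N" for r s
    using that unfolding PhiA_def rows_real by simp
  then show ?thesis unfolding parseval_frames_def using real_mem[OF F] by (auto simp: PhiA_def)
qed

lemma PhiA_tc:
  assumes F: "Fld = \<real> \<or> Fld = UNIV" and N: "1 \<le> N" "N < M"
  shows "real (M - N) \<le> total_coherence M N (PhiA M N)"
proof -
  let ?K = "Suc (M - N)"
  have K: "2 \<le> ?K" using N by simp
  obtain N' where N': "N = Suc N'" using N by (cases N) auto
  have "cmod (frame_inner N (PhiA M N) i j) = 1 / real ?K" if ij: "i < ?K" "j < ?K" for i j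
  proof -
    have "(\<Sum>r<N. AA M N r i * AA M N r j) = (uB ?K)^2 + (\<Sum>r<N'. 0)"
      unfolding N' sum.lessThan_Suc_shift using ij N N'
      by (intro arg_cong2[where f="(+)"] sum.cong) (auto simp: AA_def power2_eq_square)
    also have "\<dots> = 1 / real ?K" using uB_props(3)[OF K]
      by (simp add: field_simps del: of_nat_Suc)
    finally have fe: "frame_inner N (PhiA M N) i j = complex_of_real (1 / real ?K)"
      unfolding PhiA_def fi_real by simp
    show ?thesis unfolding fe norm_of_real by simp
  qed
  then have "real ?K - 1 \<le> total_coherence M N (PhiA M N)"
    using N by (intro tc_block[of "{..<?K}"]) auto
  then show ?thesis by simp
qed



lemma swap4: "(\<Sum>i\<in>A. \<Sum>j\<in>B. \<Sum>r\<in>C. \<Sum>s\<in>D. f i j r s) = (\<Sum>r\<in>C. \<Sum>s\<in>D. \<Sum>i\<in>A. \<Sum>j\<in>B. f i j r s)"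
proof -
  have "(\<Sum>i\<in>A. \<Sum>j\<in>B. \<Sum>r\<in>C. \<Sum>s\<in>D. f i j r s) = (\<Sum>i\<in>A. \<Sum>r\<in>C. \<Sum>j\<in>B. \<Sum>s\<in>D. f i j r s)"
    by (rule sum.cong[OF refl], rule sum.swap)
  also have "\<dots> = (\<Sum>i\<in>A. \<Sum>r\<in>C. \<Sum>s\<in>D. \<Sum>j\<in>B. f i j r s)"
    by (rule sum.cong[OF refl], rule sum.cong[OF refl], rule sum.swap)
  also have "\<dots> = (\<Sum>r\<in>C. \<Sum>i\<in>A. \<Sum>s\<in>D. \<Sum>j\<in>B. f i j r s)"
    by (rule sum.swap)
  also have "\<dots> = (\<Sum>r\<in>C. \<Sum>s\<in>D. \<Sum>i\<in>A. \<Sum>j\<in>B. f i j r s)"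
    by (rule sum.cong[OF refl], rule sum.swap)
  finally show ?thesis .
qed

lemma gram_sq:
  assumes P: "Psi \<in> parseval_frames Fld M N"
  shows "(\<Sum>i<M. \<Sum>j<M. frame_inner N Psi i j * cnj (frame_inner N Psi i j)) = of_nat N"
proof -
  have orth: "\<And>r s. r < N \<Longrightarrow> s < N \<Longrightarrow> (\<Sum>j<M. Psi r j * cnj (Psi s j)) = (if r = s then 1 else 0)"
    using P unfolding parseval_frames_def by auto
  have a: "frame_inner N Psi i j * cnj (frame_inner N Psi i j)
     = (\<Sum>r<N. \<Sum>s<N. (Psi r i * cnj (Psi s i)) * (Psi s j * cnj (Psi r j)))" for i j
    unfolding frame_inner_def cnj_sum sum_product by (simp add: mult_ac)
  have "(\<Sum>i<M. \<Sum>j<M. frame_inner N Psi i j * cnj (frame_inner N Psi i j))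
      = (\<Sum>i<M. \<Sum>j<M. \<Sum>r<N. \<Sum>s<N. (Psi r i * cnj (Psi s i)) * (Psi s j * cnj (Psi r j)))"
    unfolding a ..
  also have "\<dots> = (\<Sum>r<N. \<Sum>s<N. \<Sum>i<M. \<Sum>j<M. (Psi r i * cnj (Psi s i)) * (Psi s j * cnj (Psi r j)))"
    by (rule swap4)
  also have "\<dots> = (\<Sum>r<N. \<Sum>s<N. (\<Sum>i<M. Psi r i * cnj (Psi s i)) * (\<Sum>j<M. Psi s j * cnj (Psi r j)))"
    unfolding sum_product ..
  also have "\<dots> = (\<Sum>r<N. \<Sum>s<N. (if r = s then 1 else 0))"
    by (intro sum.cong refl) (simp add: orth)
  also have "\<dots> = of_nat N" by simp
  finally show ?thesis .
qed


lemma upper: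
  assumes P: "Psi \<in> parseval_frames Fld M N" and N: "N \<le> M" and M0: "0 < M"
  shows "total_coherence M N Psi \<le> sqrt (real N * real (M - N) * real (M - 1))"
proof -
  define G where "G i j = frame_inner N Psi i j" for i j
  define d where "d i = (\<Sum>r<N. (cmod (Psi r i))^2)" for i
  have orth: "\<And>r s. r < N \<Longrightarrow> s < N \<Longrightarrow> (\<Sum>j<M. Psi r j * cnj (Psi s j)) = (if r = s then 1 else 0)"
    using P unfolding parseval_frames_def by auto
  have sq: "(\<Sum>i<M. \<Sum>j<M. (cmod (G i j))^2) = real N"
  proof -
    have "complex_of_real (\<Sum>i<M. \<Sum>j<M. (cmod (G i j))^2) = (\<Sum>i<M. \<Sum>j<M. G i j * cnj (G i j))"
      by (simp add: complex_norm_square[symmetric])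
    also have "\<dots> = of_nat N" unfolding G_def by (rule gram_sq[OF P])
    finally show ?thesis by (metis of_real_eq_iff of_real_of_nat_eq)
  qed
  have Gd: "G i i = complex_of_real (d i)" for i
    unfolding G_def d_def frame_inner_def by (simp add: complex_norm_square[symmetric])
  have dsum: "(\<Sum>i<M. d i) = real N"
  proof -
    have "complex_of_real (\<Sum>i<M. d i) = (\<Sum>r<N. \<Sum>i<M. Psi r i * cnj (Psi r i))"
      unfolding d_def of_real_sum by (subst sum.swap) (simp add: complex_norm_square[symmetric])
    also have "\<dots> = of_nat N" by (simp add: orth)
    finally show ?thesis by (metis of_real_eq_iff of_real_of_nat_eq)
  qed
  have dnn: "d i \<ge> 0" for i unfolding d_def by (intro sum_nonneg) auto
  define off where "off = (\<Sum>i<M. \<Sum>j\<in>{..<M}-{i}. (cmod (G i j))^2)"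
  have split: "(\<Sum>i<M. \<Sum>j<M. (cmod (G i j))^2) = (\<Sum>i<M. (d i)^2) + off"
  proof -
    have "(\<Sum>j<M. (cmod (G i j))^2) = (d i)^2 + (\<Sum>j\<in>{..<M}-{i}. (cmod (G i j))^2)" if "i < M" for i
      using that dnn[of i] by (subst sum.remove[of _ i]) (auto simp: Gd)
    then show ?thesis unfolding off_def by (simp add: sum.distrib)
  qed
  have cs1: "(real N)^2 \<le> (\<Sum>i<M. (d i)^2) * real M"
    using sum_squared_le_sum_of_squares[of d "{..<M}"] dsum by simp
  have Mpos: "real M > 0" using M0 by simp
  have offle: "off * real M \<le> real N * (real M - real N)"
    using sq split cs1 by (simp add: algebra_simps power2_eq_square)
  define S where "S = Sigma {..<M} (\<lambda>i. {..<M} - {i})"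
  have finS: "finite S" unfolding S_def by auto
  have cardS: "real (card S) = real M * (real M - 1)"
  proof -
    have "card S = (\<Sum>i<M. card ({..<M} - {i}))" unfolding S_def by simp
    also have "\<dots> = (\<Sum>i<M. M - 1)" by (intro sum.cong) auto
    finally show ?thesis using Mpos by (simp add: of_nat_diff)
  qed
  have tcS: "total_coherence M N Psi = (\<Sum>p\<in>S. cmod (G (fst p) (snd p)))"
    unfolding total_coherence_def S_def G_def by (simp add: sum.Sigma split_def)
  have offS: "off = (\<Sum>p\<in>S. (cmod (G (fst p) (snd p)))^2)"
    unfolding off_def S_def by (simp add: sum.Sigma split_def)
  have "(total_coherence M N Psi)^2 \<le> off * real (card S)"
    unfolding tcS offS by (rule sum_squared_le_sum_of_squares)
  also have "\<dots> = (off * real M) * (real M - 1)" unfolding cardS by simp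
  also have "\<dots> \<le> (real N * (real M - real N)) * (real M - 1)"
    using offle Mpos by (intro mult_right_mono) auto
  also have "\<dots> = real N * real (M - N) * real (M - 1)"
    using N Mpos by (simp add: of_nat_diff)
  finally have "(total_coherence M N Psi)^2 \<le> real N * real (M - N) * real (M - 1)" .
  then show ?thesis using real_le_rsqrt by blast
qed


theorem proposition3:
  fixes Fld :: "complex set" and M N :: nat and Psi :: "nat \<Rightarrow> nat \<Rightarrow> complex"
  assumes "Fld = \<real> \<or> Fld = UNIV"
    and "1 \<le> N" and "N < M"
    and "Psi \<in> parseval_frames Fld M N"
    and "\<forall>Phi \<in> parseval_frames Fld M N. total_coherence M N Phi \<le> total_coherence M N Psi"
  shows "real (max N (M - N)) \<le> total_coherence M N Psi
       \<and> total_coherence M N Psi \<le> sqrt (real N * real (M - N) * real (M - 1))"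
proof
  have a: "real N \<le> total_coherence M N Psi"
    using PhiB_tc[OF assms(1-3)] PhiB_frame[OF assms(1-3)] assms(5) by force
  have b: "real (M - N) \<le> total_coherence M N Psi"
    using PhiA_tc[OF assms(1-3)] PhiA_frame[OF assms(1-3)] assms(5) by force
  show "real (max N (M - N)) \<le> total_coherence M N Psi"
    using a b by (cases "N \<le> M - N") (simp_all add: max_def)
  show "total_coherence M N Psi \<le> sqrt (real N * real (M - N) * real (M - 1))"
    using upper[OF assms(4)] assms(3) by simp
qed

end
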